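(* Let $n\ge 1$, $i\in\{1,\ldots,n-1\}$, and let $C$ be an $s_i$-stable set of transpositions in $S_n$ (i.e. $s_i\in C$ and $s_iCs_i=C$). Then $\partial_i$ maps $H_C$ to $H_C$, and both the kernel and the image of $\partial_i:H_C\to H_C$ are equal to $H_C^{*s_i}=\{f\in H_C\mid f*s_i=f\}$.
   Context: Let $S_n$ be the symmetric group on $\{1,\ldots,n\}$ with $(vw)(j)=v(w(j))$, and $s_i=(i\leftrightarrow i+1)$. Let $H=\mathrm{Fun}(S_n,\mathbb{C}[t_1,\ldots,t_n])$ with pointwise operations. The star action is $(f*w)(v)=f(vw^{-1})$. Let $x_i\in H$ be the function $v\mapsto t_{v(i)}$. For a transposition $\tau=(i\leftrightarrow k)$, $f\in H$ satisfies condition $\tau$ if $f-f*\tau=(x_i-x_k)g$ for some $g\in H$; these form a subring $H_\tau$, and for a set $C$ of transpositions $H_C=\bigcap_{\tau\in C}H_\tau$. For $f\in H_{s_i}$, $\partial_i(f)$ is the unique $g\in H$ with $f-f*s_i=(x_i-x_{i+1})g$. *)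

theory Defs
  imports "HOL-Combinatorics.Combinatorics" "HOL-Library.Poly_Mapping"
begin

text \<open>Polynomial ring C[t_1,...,t_n] (all variables t_j, j : nat; only j in 1..n are used):
  finitely supported maps from monomials (exponent vectors) to coefficients.\<close>
type_synonym mpoly = "(nat \<Rightarrow>\<^sub>0 nat) \<Rightarrow>\<^sub>0 complex"

definition tvar :: "nat \<Rightarrow> mpoly" where
  "tvar j = Poly_Mapping.single (Poly_Mapping.single j 1) 1"

text \<open>The symmetric group S_n on {1..n}; composition (v w)(j) = v (w j) is v o w.\<close>
definition Sn :: "nat \<Rightarrow> (nat \<Rightarrow> nat) set" where
  "Sn n = {v. v permutes {1..n}}"

text \<open>H = Fun(S_n, C[t]): functions on permutations, extensionally zero off S_n.
  Values lie in C[t_1,...,t_n] (only variables 1..n occur). Ring operations are pointwise.\<close>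
definition Hn :: "nat \<Rightarrow> ((nat \<Rightarrow> nat) \<Rightarrow> mpoly) set" where
  "Hn n = {f. (\<forall>v. v \<notin> Sn n \<longrightarrow> f v = 0) \<and>
     (\<forall>v. \<forall>m \<in> Poly_Mapping.keys (f v). Poly_Mapping.keys m \<subseteq> {1..n})}"

definition star :: "((nat \<Rightarrow> nat) \<Rightarrow> mpoly) \<Rightarrow> (nat \<Rightarrow> nat) \<Rightarrow> ((nat \<Rightarrow> nat) \<Rightarrow> mpoly)" where
  "star f w = (\<lambda>v. f (v \<circ> inv w))"

definition xfun :: "nat \<Rightarrow> nat \<Rightarrow> (nat \<Rightarrow> nat) \<Rightarrow> mpoly" where
  "xfun n i = (\<lambda>v. if v \<in> Sn n then tvar (v i) else 0)"

definition simple :: "nat \<Rightarrow> nat \<Rightarrow> nat" where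
  "simple i = transpose i (Suc i)"

definition transpositions :: "nat \<Rightarrow> (nat \<Rightarrow> nat) set" where
  "transpositions n = {transpose a b | a b. a \<in> {1..n} \<and> b \<in> {1..n} \<and> a \<noteq> b}"

definition Htau :: "nat \<Rightarrow> (nat \<Rightarrow> nat) \<Rightarrow> ((nat \<Rightarrow> nat) \<Rightarrow> mpoly) set" where
  "Htau n \<tau> = {f \<in> Hn n. \<exists>i k. i \<noteq> k \<and> \<tau> = transpose i k \<and>
      (\<exists>g \<in> Hn n. \<forall>v. f v - star f \<tau> v = (xfun n i v - xfun n k v) * g v)}"

definition HC :: "nat \<Rightarrow> (nat \<Rightarrow> nat) set \<Rightarrow> ((nat \<Rightarrow> nat) \<Rightarrow> mpoly) set" where
  "HC n C = {f \<in> Hn n. \<forall>\<tau> \<in> C. f \<in> Htau n \<tau>}"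

definition ddiff :: "nat \<Rightarrow> nat \<Rightarrow> ((nat \<Rightarrow> nat) \<Rightarrow> mpoly) \<Rightarrow> ((nat \<Rightarrow> nat) \<Rightarrow> mpoly)" where
  "ddiff n i f = (THE g. g \<in> Hn n \<and>
      (\<forall>v. f v - star f (simple i) v = (xfun n i v - xfun n (Suc i) v) * g v))"

end

theory Submission
  imports Defs
begin

definition subm :: "nat \<Rightarrow> nat \<Rightarrow> (nat \<Rightarrow>\<^sub>0 nat) \<Rightarrow> (nat \<Rightarrow>\<^sub>0 nat)" where
  "subm x y m = Poly_Mapping.update x 0 m + Poly_Mapping.single y (Poly_Mapping.lookup m x)"

lemma lookup_subm: "Poly_Mapping.lookup (subm x y m) j = (if j = x then 0 else Poly_Mapping.lookup m j) + (if j = y then Poly_Mapping.lookup m x else 0)"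
  by (simp add: subm_def lookup_add lookup_update lookup_single when_def)

lemma subm_add: "subm x y (m + m') = subm x y m + subm x y m'"
  by (rule poly_mapping_eqI) (simp add: lookup_subm lookup_add)

lemma subm_zero[simp]: "subm x y 0 = 0"
  by (rule poly_mapping_eqI) (simp add: lookup_subm)

definition sigma :: "nat \<Rightarrow> nat \<Rightarrow> mpoly \<Rightarrow> mpoly" where
  "sigma x y p = (\<Sum>m\<in>Poly_Mapping.keys p. Poly_Mapping.single (subm x y m) (Poly_Mapping.lookup p m))"

lemma sigma_superset:
  assumes "finite S" "Poly_Mapping.keys p \<subseteq> S"
  shows "sigma x y p = (\<Sum>m\<in>S. Poly_Mapping.single (subm x y m) (Poly_Mapping.lookup p m))"
  unfolding sigma_def
  by (rule sum.mono_neutral_left) (use assms in \<open>auto simp: in_keys_iff\<close>)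

lemma sigma_add[simp]: "sigma x y (p + q) = sigma x y p + sigma x y q"
proof -
  let ?S = "Poly_Mapping.keys p \<union> Poly_Mapping.keys q"
  have k: "Poly_Mapping.keys (p+q) \<subseteq> ?S" by (rule keys_add)
  show ?thesis
    by (simp add: sigma_superset[OF _ k] sigma_superset[of ?S p] sigma_superset[of ?S q]
        lookup_add single_add sum.distrib)
qed

lemma sigma_zero[simp]: "sigma x y 0 = 0"
  by (simp add: sigma_def)

lemma sigma_uminus[simp]: "sigma x y (- p) = - sigma x y p"
proof -
  have "sigma x y (p + - p) = 0" by simp
  then show ?thesis by (simp only: sigma_add) (metis minus_unique)
qed

lemma sigma_diff[simp]: "sigma x y (p - q) = sigma x y p - sigma x y q"
  using sigma_add[of x y p "-q"] by simp

lemma sigma_sum: "sigma x y (sum f A) = (\<Sum>a\<in>A. sigma x y (f a))"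
  by (induction A rule: infinite_finite_induct) auto

lemma sigma_single[simp]: "sigma x y (Poly_Mapping.single m c) = Poly_Mapping.single (subm x y m) c"
  by (simp add: sigma_def)

lemma poly_expand: "p = (\<Sum>m\<in>Poly_Mapping.keys (p::mpoly). Poly_Mapping.single m (Poly_Mapping.lookup p m))"
proof (rule poly_mapping_eqI)
  fix k
  have "(\<Sum>m\<in>Poly_Mapping.keys p. Poly_Mapping.lookup (Poly_Mapping.single m (Poly_Mapping.lookup p m)) k)
      = (\<Sum>m\<in>Poly_Mapping.keys p. if m = k then Poly_Mapping.lookup p k else 0)"
    by (rule sum.cong) (auto simp: lookup_single when_def)
  also have "\<dots> = Poly_Mapping.lookup p k" by (auto simp: in_keys_iff)
  finally show "Poly_Mapping.lookup p k = Poly_Mapping.lookup (\<Sum>m\<in>Poly_Mapping.keys p. Poly_Mapping.single m (Poly_Mapping.lookup p m)) k"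
    by (simp add: lookup_sum)
qed

lemma sigma_mult[simp]: "sigma x y (p * q) = sigma x y p * sigma x y q"
proof -
  let ?A = "Poly_Mapping.keys p" and ?B = "Poly_Mapping.keys q"
  have "p * q = (\<Sum>m\<in>?A. Poly_Mapping.single m (Poly_Mapping.lookup p m)) * (\<Sum>m\<in>?B. Poly_Mapping.single m (Poly_Mapping.lookup q m))"
    using poly_expand[of p] poly_expand[of q] by simp
  also have "\<dots> = (\<Sum>m\<in>?A. \<Sum>m'\<in>?B. Poly_Mapping.single (m + m') (Poly_Mapping.lookup p m * Poly_Mapping.lookup q m'))"
    by (simp add: sum_product mult_single)
  finally have pq: "sigma x y (p*q) = (\<Sum>m\<in>?A. \<Sum>m'\<in>?B. Poly_Mapping.single (subm x y m + subm x y m') (Poly_Mapping.lookup p m * Poly_Mapping.lookup q m'))"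
    by (simp add: sigma_sum subm_add)
  have "sigma x y p * sigma x y q = (\<Sum>m\<in>?A. Poly_Mapping.single (subm x y m) (Poly_Mapping.lookup p m)) * (\<Sum>m\<in>?B. Poly_Mapping.single (subm x y m) (Poly_Mapping.lookup q m))"
    by (simp add: sigma_def)
  also have "\<dots> = (\<Sum>m\<in>?A. \<Sum>m'\<in>?B. Poly_Mapping.single (subm x y m + subm x y m') (Poly_Mapping.lookup p m * Poly_Mapping.lookup q m'))"
    by (simp add: sum_product mult_single)
  finally show ?thesis using pq by simp
qed

lemma sigma_one[simp]: "sigma x y 1 = 1"
proof -
  have "(1::mpoly) = Poly_Mapping.single 0 1" by simp
  then show ?thesis by (metis sigma_single subm_zero)
qed

lemma sigma_tvar: "sigma x y (tvar z) = tvar (if z = x then y else z)"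
proof -
  have "subm x y (Poly_Mapping.single z 1) = Poly_Mapping.single (if z = x then y else z) 1"
    by (rule poly_mapping_eqI) (auto simp: lookup_subm lookup_single when_def)
  then show ?thesis by (simp add: tvar_def)
qed

lemma tvar_inj: "tvar a = tvar b \<longleftrightarrow> a = b"
proof
  assume "tvar a = tvar b"
  then have "Poly_Mapping.lookup (tvar a) (Poly_Mapping.single a 1) = Poly_Mapping.lookup (tvar b) (Poly_Mapping.single a 1)" by simp
  then have "Poly_Mapping.single a (1::nat) = Poly_Mapping.single b 1"
    by (simp add: tvar_def lookup_single when_def split: if_splits)
  then have "Poly_Mapping.lookup (Poly_Mapping.single a (1::nat)) a = Poly_Mapping.lookup (Poly_Mapping.single b 1) a" by simp
  then show "a = b" by (simp add: lookup_single when_def split: if_splits)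
qed simp

definition good :: "nat set \<Rightarrow> mpoly \<Rightarrow> bool" where
  "good V p \<longleftrightarrow> (\<forall>m\<in>Poly_Mapping.keys p. Poly_Mapping.keys m \<subseteq> V)"

lemma good_zero[simp]: "good V 0" by (simp add: good_def)
lemma good_add: "good V p \<Longrightarrow> good V q \<Longrightarrow> good V (p + q)"
  using keys_add[of p q] by (auto simp: good_def)
lemma good_uminus: "good V p \<Longrightarrow> good V (- p)"
  by (simp add: good_def)
lemma good_diff: "good V p \<Longrightarrow> good V q \<Longrightarrow> good V (p - q)"
  using good_add[of V p "-q"] good_uminus[of V q] by simp
lemma good_mult: "good V p \<Longrightarrow> good V q \<Longrightarrow> good V (p * q)"
  using keys_mult[of p q] unfolding good_def
  by (smt (verit, ccfv_threshold) Un_subset_iff keys_add mem_Collect_eq subset_eq)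
lemma good_single: "Poly_Mapping.keys m \<subseteq> V \<Longrightarrow> good V (Poly_Mapping.single m c)"
  by (simp add: good_def)
lemma good_tvar: "z \<in> V \<Longrightarrow> good V (tvar z)"
  by (simp add: good_def tvar_def)
lemma good_sum: "(\<And>a. a \<in> A \<Longrightarrow> good V (f a)) \<Longrightarrow> good V (sum f A)"
  by (induction A rule: infinite_finite_induct) (auto intro: good_add)

lemma quot_single:
  assumes "x \<in> V" "y \<in> V" "x \<noteq> y" "Poly_Mapping.keys m \<subseteq> V"
  shows "\<exists>q. good V q \<and> Poly_Mapping.single m c - sigma x y (Poly_Mapping.single m c) = (tvar x - tvar y) * q"
  using assms(4)
proof (induction "Poly_Mapping.lookup m x" arbitrary: m)
  case 0
  then have "subm x y m = m"
    using assms(3) by (intro poly_mapping_eqI) (simp add: lookup_subm)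
  then show ?case by (intro exI[of _ 0]) simp
next
  case (Suc k)
  define m' where "m' = Poly_Mapping.update x k m"
  have km': "Poly_Mapping.lookup m' x = k" by (simp add: m'_def lookup_update)
  have m: "m = Poly_Mapping.single x 1 + m'"
    using Suc(2) by (intro poly_mapping_eqI) (auto simp: m'_def lookup_add lookup_update lookup_single when_def)
  have keys': "Poly_Mapping.keys m' \<subseteq> V"
    using Suc(3) assms(1) by (auto simp: m'_def keys_update)
  obtain q' where q': "good V q'" "Poly_Mapping.single m' c - sigma x y (Poly_Mapping.single m' c) = (tvar x - tvar y) * q'"
    using Suc(1)[OF km'[symmetric] keys'] by blast
  have e: "Poly_Mapping.single m c = tvar x * Poly_Mapping.single m' c"
    by (simp add: tvar_def mult_single m)
  have "Poly_Mapping.single m c - sigma x y (Poly_Mapping.single m c)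
     = tvar x * Poly_Mapping.single m' c - tvar y * sigma x y (Poly_Mapping.single m' c)"
    by (simp only: e sigma_mult sigma_tvar) simp
  also have "\<dots> = (tvar x - tvar y) * Poly_Mapping.single m' c + tvar y * (Poly_Mapping.single m' c - sigma x y (Poly_Mapping.single m' c))"
    by (simp add: algebra_simps)
  also have "\<dots> = (tvar x - tvar y) * Poly_Mapping.single m' c + tvar y * ((tvar x - tvar y) * q')"
    by (simp only: q'(2))
  also have "\<dots> = (tvar x - tvar y) * (Poly_Mapping.single m' c + tvar y * q')"
    by (simp add: algebra_simps)
  finally show ?case
    using q'(1) keys' assms(2) by (intro exI[of _ "Poly_Mapping.single m' c + tvar y * q'"]) 
      (auto intro!: good_add good_mult good_single good_tvar)
qed

lemma quot:
  assumes "x \<in> V" "y \<in> V" "x \<noteq> y" "good V p"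
  shows "\<exists>q. good V q \<and> p - sigma x y p = (tvar x - tvar y) * q"
proof -
  have "\<forall>m\<in>Poly_Mapping.keys p. \<exists>q. good V q \<and> Poly_Mapping.single m (Poly_Mapping.lookup p m) - sigma x y (Poly_Mapping.single m (Poly_Mapping.lookup p m)) = (tvar x - tvar y) * q"
    using assms quot_single by (auto simp: good_def)
  then obtain Q where Q: "\<And>m. m \<in> Poly_Mapping.keys p \<Longrightarrow> good V (Q m) \<and> Poly_Mapping.single m (Poly_Mapping.lookup p m) - sigma x y (Poly_Mapping.single m (Poly_Mapping.lookup p m)) = (tvar x - tvar y) * Q m"
    by metis
  have "p - sigma x y p = (\<Sum>m\<in>Poly_Mapping.keys p. Poly_Mapping.single m (Poly_Mapping.lookup p m) - sigma x y (Poly_Mapping.single m (Poly_Mapping.lookup p m)))"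
    by (subst (1 2) poly_expand) (simp add: sigma_sum sum_subtractf)
  also have "\<dots> = (tvar x - tvar y) * (\<Sum>m\<in>Poly_Mapping.keys p. Q m)"
    unfolding sum_distrib_left by (rule sum.cong) (use Q in auto)
  finally show ?thesis using Q by (intro exI[of _ "\<Sum>m\<in>Poly_Mapping.keys p. Q m"]) (auto intro: good_sum)
qed

lemma sigma_L: "sigma x y (tvar x - tvar y) = 0"
  by (simp add: sigma_tvar)

lemma div_iff:
  assumes "x \<in> V" "y \<in> V" "x \<noteq> y" "good V p"
  shows "(\<exists>q. good V q \<and> p = (tvar x - tvar y) * q) \<longleftrightarrow> sigma x y p = 0"
proof
  assume "\<exists>q. good V q \<and> p = (tvar x - tvar y) * q"
  then show "sigma x y p = 0" using sigma_L by auto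
next
  assume "sigma x y p = 0"
  then show "\<exists>q. good V q \<and> p = (tvar x - tvar y) * q" using quot[OF assms] by simp
qed


lemma Hn_iff: "f \<in> Hn n \<longleftrightarrow> (\<forall>v. v \<notin> Sn n \<longrightarrow> f v = 0) \<and> (\<forall>v. good {1..n} (f v))"
  by (simp add: Hn_def good_def)

lemma Sn_comp: "v \<in> Sn n \<Longrightarrow> w \<in> Sn n \<Longrightarrow> v \<circ> w \<in> Sn n"
  by (simp add: Sn_def permutes_compose)

lemma tr_Sn: "a \<in> {1..n} \<Longrightarrow> b \<in> {1..n} \<Longrightarrow> transpose a b \<in> Sn n"
  by (simp add: Sn_def permutes_swap_id)

lemma Sn_comp_tr: "a \<in> {1..n} \<Longrightarrow> b \<in> {1..n} \<Longrightarrow> v \<circ> transpose a b \<in> Sn n \<longleftrightarrow> v \<in> Sn n"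
proof
  assume a: "a \<in> {1..n}" "b \<in> {1..n}" "v \<circ> transpose a b \<in> Sn n"
  have "v = (v \<circ> transpose a b) \<circ> transpose a b" by (simp add: comp_assoc)
  then show "v \<in> Sn n" using a Sn_comp tr_Sn by metis
qed (simp add: Sn_comp tr_Sn)

lemma Sn_range: "v \<in> Sn n \<Longrightarrow> j \<in> {1..n} \<Longrightarrow> v j \<in> {1..n}"
  unfolding Sn_def by (metis mem_Collect_eq permutes_in_image)

lemma Sn_inj: "v \<in> Sn n \<Longrightarrow> inj v"
  by (simp add: Sn_def permutes_inj)

lemma star_tr: "star f (transpose a b) = (\<lambda>v. f (v \<circ> transpose a b))"
  by (simp add: star_def)

lemma transpose_eq_cases:
  assumes "a \<noteq> b" "i' \<noteq> k'" "transpose i' k' = transpose a b"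
  shows "(i' = a \<and> k' = b) \<or> (i' = b \<and> k' = a)"
proof -
  have "transpose a b i' = k'" "transpose a b k' = i'" using assms(3) by (metis transpose_apply_first transpose_apply_second)+
  then show ?thesis using assms(1,2) by (auto simp: transpose_eq_iff)
qed

lemma sigma_tvar_diff_sym: "x \<noteq> y \<Longrightarrow> sigma x y (tvar y - tvar x) = 0"
  by (simp add: sigma_tvar)

lemma Htau_iff:
  assumes V: "a \<in> {1..n}" "b \<in> {1..n}" "a \<noteq> b" and f: "f \<in> Hn n"
  shows "f \<in> Htau n (transpose a b) \<longleftrightarrow> (\<forall>v\<in>Sn n. sigma (v a) (v b) (f v - f (v \<circ> transpose a b)) = 0)"
proof
  assume "f \<in> Htau n (transpose a b)"
  then obtain i' k' g where ik: "i' \<noteq> k'" "transpose a b = transpose i' k'" and g: "g \<in> Hn n"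
    and eq: "\<And>v. f v - star f (transpose a b) v = (xfun n i' v - xfun n k' v) * g v"
    unfolding Htau_def by blast
  have c: "(i' = a \<and> k' = b) \<or> (i' = b \<and> k' = a)" using transpose_eq_cases[OF V(3) ik(1) ik(2)[symmetric]] .
  show "\<forall>v\<in>Sn n. sigma (v a) (v b) (f v - f (v \<circ> transpose a b)) = 0"
  proof
    fix v assume v: "v \<in> Sn n"
    have "v a \<noteq> v b" using Sn_inj[OF v] V(3) by (meson injD)
    have "f v - f (v \<circ> transpose a b) = (tvar (v i') - tvar (v k')) * g v"
      using eq[of v] v by (simp add: star_tr xfun_def)
    then show "sigma (v a) (v b) (f v - f (v \<circ> transpose a b)) = 0"
      using c \<open>v a \<noteq> v b\<close> by (auto simp: sigma_tvar)
  qed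
next
  assume H: "\<forall>v\<in>Sn n. sigma (v a) (v b) (f v - f (v \<circ> transpose a b)) = 0"
  define g where "g v = (if v \<in> Sn n then (SOME q. good {1..n} q \<and> f v - f (v \<circ> transpose a b) = (tvar (v a) - tvar (v b)) * q) else 0)" for v
  have gv: "good {1..n} (g v) \<and> (v \<in> Sn n \<longrightarrow> f v - f (v \<circ> transpose a b) = (tvar (v a) - tvar (v b)) * g v)" for v
  proof (cases "v \<in> Sn n")
    case True
    have ne: "v a \<noteq> v b" using Sn_inj[OF True] V(3) by (meson injD)
    have gd: "good {1..n} (f v - f (v \<circ> transpose a b))" using f by (simp add: Hn_iff good_diff)
    have ex: "\<exists>q. good {1..n} q \<and> f v - f (v \<circ> transpose a b) = (tvar (v a) - tvar (v b)) * q"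
      using div_iff[OF Sn_range[OF True V(1)] Sn_range[OF True V(2)] ne gd] H True by blast
    show ?thesis using someI_ex[OF ex] True by (simp add: g_def)
  qed (simp add: g_def)
  have gH: "g \<in> Hn n" using gv by (simp add: Hn_iff g_def)
  have "\<forall>v. f v - star f (transpose a b) v = (xfun n a v - xfun n b v) * g v"
  proof
    fix v show "f v - star f (transpose a b) v = (xfun n a v - xfun n b v) * g v"
    proof (cases "v \<in> Sn n")
      case True then show ?thesis using gv[of v] by (simp add: star_tr xfun_def)
    next
      case False
      then have "v \<circ> transpose a b \<notin> Sn n" using Sn_comp_tr V by blast
      then show ?thesis using False f by (simp add: star_tr xfun_def Hn_iff g_def)
    qed
  qed
  then show "f \<in> Htau n (transpose a b)" unfolding Htau_def using f gH V(3) by blast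
qed

definition dprop :: "nat \<Rightarrow> nat \<Rightarrow> ((nat \<Rightarrow> nat) \<Rightarrow> mpoly) \<Rightarrow> ((nat \<Rightarrow> nat) \<Rightarrow> mpoly) \<Rightarrow> bool" where
  "dprop n i f g \<longleftrightarrow> g \<in> Hn n \<and> (\<forall>v. f v - star f (simple i) v = (xfun n i v - xfun n (Suc i) v) * g v)"

lemma dprop_unique:
  assumes "1 \<le> i" "Suc i \<le> n" "dprop n i f g" "dprop n i f g'"
  shows "g = g'"
proof
  fix v show "g v = g' v"
  proof (cases "v \<in> Sn n")
    case True
    have "v i \<noteq> v (Suc i)" using Sn_inj[OF True] by (meson injD n_not_Suc_n)
    then have ne: "tvar (v i) - tvar (v (Suc i)) \<noteq> 0" by (simp add: tvar_inj)
    have e1: "f v - star f (simple i) v = (xfun n i v - xfun n (Suc i) v) * g v"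
      using assms(3) by (simp add: dprop_def)
    have e2: "f v - star f (simple i) v = (xfun n i v - xfun n (Suc i) v) * g' v"
      using assms(4) by (simp add: dprop_def)
    show ?thesis using e1 e2 True ne by (auto simp: xfun_def)
  next
    case False then show ?thesis using assms(3,4) by (simp add: dprop_def Hn_iff)
  qed
qed

lemma dprop_exists:
  assumes "1 \<le> i" "Suc i \<le> n" "f \<in> Htau n (simple i)"
  shows "\<exists>g. dprop n i f g"
proof -
  obtain i' k' g where ik: "i' \<noteq> k'" "simple i = transpose i' k'" and g: "g \<in> Hn n"
    and eq: "\<And>v. f v - star f (simple i) v = (xfun n i' v - xfun n k' v) * g v"
    using assms(3) unfolding Htau_def by blast
  have c: "(i' = i \<and> k' = Suc i) \<or> (i' = Suc i \<and> k' = i)"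
    using transpose_eq_cases[of i "Suc i" i' k'] ik by (simp add: simple_def)
  then show ?thesis
  proof
    assume "i' = i \<and> k' = Suc i" then show ?thesis using g eq unfolding dprop_def by blast
  next
    assume h: "i' = Suc i \<and> k' = i"
    have "- g \<in> Hn n" using g by (simp add: Hn_iff good_uminus)
    moreover have "\<forall>v. f v - star f (simple i) v = (xfun n i v - xfun n (Suc i) v) * (- g) v"
      using eq h by (simp add: algebra_simps)
    ultimately show ?thesis unfolding dprop_def by blast
  qed
qed

lemma ddiff_prop:
  assumes "1 \<le> i" "Suc i \<le> n" "f \<in> Htau n (simple i)"
  shows "dprop n i f (ddiff n i f)"
proof -
  have "\<exists>!g. dprop n i f g" using dprop_exists[OF assms] dprop_unique[OF assms(1,2)] by blast
  then show ?thesis unfolding ddiff_def dprop_def[symmetric] by (rule theI')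
qed

lemma ddiff_eq:
  assumes "1 \<le> i" "Suc i \<le> n" "f \<in> Htau n (simple i)" "v \<in> Sn n"
  shows "f v - f (v \<circ> simple i) = (tvar (v i) - tvar (v (Suc i))) * ddiff n i f v"
  using ddiff_prop[OF assms(1-3)] assms(4) by (simp add: dprop_def xfun_def star_def simple_def)

lemma ddiff_Hn:
  assumes "1 \<le> i" "Suc i \<le> n" "f \<in> Htau n (simple i)"
  shows "ddiff n i f \<in> Hn n"
  using ddiff_prop[OF assms] by (simp add: dprop_def)

lemma ddiff_sym:
  assumes "1 \<le> i" "Suc i \<le> n" "f \<in> Htau n (simple i)" "v \<in> Sn n"
  shows "ddiff n i f (v \<circ> simple i) = ddiff n i f v"
proof -
  have V: "i \<in> {1..n}" "Suc i \<in> {1..n}" using assms by auto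
  have vs: "v \<circ> simple i \<in> Sn n" using Sn_comp_tr[OF V] assms(4) by (simp add: simple_def)
  have e1: "f v - f (v \<circ> simple i) = (tvar (v i) - tvar (v (Suc i))) * ddiff n i f v"
    using ddiff_eq[OF assms] .
  have e2: "f (v \<circ> simple i) - f (v \<circ> simple i \<circ> simple i) = (tvar ((v \<circ> simple i) i) - tvar ((v \<circ> simple i) (Suc i))) * ddiff n i f (v \<circ> simple i)"
    using ddiff_eq[OF assms(1-3) vs] .
  have ss: "v \<circ> simple i \<circ> simple i = v" by (simp add: simple_def comp_assoc)
  have e2': "f v - f (v \<circ> simple i) = (tvar (v i) - tvar (v (Suc i))) * ddiff n i f (v \<circ> simple i)"
    using e2 unfolding ss by (simp add: simple_def algebra_simps)
  have "v i \<noteq> v (Suc i)" using Sn_inj[OF assms(4)] by (meson injD n_not_Suc_n)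
  then have ne: "tvar (v i) - tvar (v (Suc i)) \<noteq> 0" by (simp add: tvar_inj)
  show ?thesis using e1 e2' ne by simp
qed


lemma conj_tr: "transpose c d \<circ> transpose a b \<circ> transpose c d = transpose (transpose c d a) (transpose c d b)"
proof
  fix x
  have "transpose (transpose c d a) (transpose c d b) (transpose c d (transpose c d x)) = transpose c d (transpose a b (transpose c d x))"
    by (subst transpose_apply_commute[of "transpose c d"]) simp_all
  then show "(transpose c d \<circ> transpose a b \<circ> transpose c d) x = transpose (transpose c d a) (transpose c d b) x"
    by simp
qed

lemma sig_st: "sigma (v a) (v b) (tvar (v (transpose a b j))) = sigma (v a) (v b) (tvar (v j))"
  by (simp add: sigma_tvar transpose_def)

lemma dd_Htau:
  assumes i: "1 \<le> i" "Suc i \<le> n" and f: "f \<in> Hn n" "f \<in> Htau n (simple i)"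
    and V: "a \<in> {1..n}" "b \<in> {1..n}" "a \<noteq> b"
    and h1: "f \<in> Htau n (transpose a b)" and h2: "f \<in> Htau n (transpose (simple i a) (simple i b))"
  shows "ddiff n i f \<in> Htau n (transpose a b)"
proof -
  let ?s = "simple i" and ?g = "ddiff n i f" and ?t = "transpose a b"
  have gH: "?g \<in> Hn n" using ddiff_Hn[OF i f(2)] .
  have iV: "i \<in> {1..n}" "Suc i \<in> {1..n}" using i by auto
  have sV: "?s a \<in> {1..n}" "?s b \<in> {1..n}" "?s a \<noteq> ?s b"
    using V iV by (auto simp: simple_def transpose_def)
  have H1: "\<forall>v\<in>Sn n. sigma (v a) (v b) (f v - f (v \<circ> ?t)) = 0"
    using h1 Htau_iff[OF V f(1)] by blast
  have H2: "\<forall>w\<in>Sn n. sigma (w (?s a)) (w (?s b)) (f w - f (w \<circ> transpose (?s a) (?s b))) = 0"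
    using h2 Htau_iff[OF sV f(1)] by blast
  show ?thesis
  proof (cases "?t = ?s")
    case True
    have "\<forall>v\<in>Sn n. ?g v - ?g (v \<circ> ?t) = 0" using ddiff_sym[OF i f(2)] True by simp
    then show ?thesis using Htau_iff[OF V gH] by simp
  next
    case False
    show ?thesis unfolding Htau_iff[OF V gH]
    proof
      fix v assume v: "v \<in> Sn n"
      let ?\<sigma> = "sigma (v a) (v b)"
      have vt: "v \<circ> ?t \<in> Sn n" using Sn_comp_tr[OF V(1,2)] v by simp
      have vs: "v \<circ> ?s \<in> Sn n" using Sn_comp_tr[OF iV] v by (simp add: simple_def)
      have e1: "f v - f (v \<circ> ?s) = (tvar (v i) - tvar (v (Suc i))) * ?g v"
        using ddiff_eq[OF i f(2) v] .
      have e2: "f (v \<circ> ?t) - f (v \<circ> ?t \<circ> ?s) = (tvar (v (?t i)) - tvar (v (?t (Suc i)))) * ?g (v \<circ> ?t)"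
        using ddiff_eq[OF i f(2) vt] by simp
      have c: "v \<circ> ?s \<circ> transpose (?s a) (?s b) = v \<circ> ?t \<circ> ?s"
      proof -
        have "transpose (?s a) (?s b) = ?s \<circ> ?t \<circ> ?s" unfolding simple_def by (rule conj_tr[symmetric])
        then have "v \<circ> ?s \<circ> transpose (?s a) (?s b) = v \<circ> (?s \<circ> ?s) \<circ> ?t \<circ> ?s" by (simp add: comp_assoc)
        then show ?thesis by (simp add: simple_def)
      qed
      have sa: "(v \<circ> ?s) (?s a) = v a" "(v \<circ> ?s) (?s b) = v b" by (simp_all add: simple_def)
      have h2': "?\<sigma> (f (v \<circ> ?s) - f (v \<circ> ?t \<circ> ?s)) = 0"
        using H2 vs c sa by metis
      have h1': "?\<sigma> (f v - f (v \<circ> ?t)) = 0" using H1 v by blast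
      have z: "?\<sigma> (tvar (v i) - tvar (v (Suc i))) * ?\<sigma> (?g v - ?g (v \<circ> ?t)) = 0"
      proof -
        have "?\<sigma> (tvar (v i) - tvar (v (Suc i))) * ?\<sigma> (?g v - ?g (v \<circ> ?t))
           = ?\<sigma> ((tvar (v i) - tvar (v (Suc i))) * ?g v) - ?\<sigma> ((tvar (v (?t i)) - tvar (v (?t (Suc i)))) * ?g (v \<circ> ?t))"
          by (simp only: sigma_mult sigma_diff sig_st) (simp add: algebra_simps)
        also have "\<dots> = ?\<sigma> (f v - f (v \<circ> ?s)) - ?\<sigma> (f (v \<circ> ?t) - f (v \<circ> ?t \<circ> ?s))"
          by (simp only: e1 e2)
        also have "\<dots> = ?\<sigma> (f v - f (v \<circ> ?t)) - ?\<sigma> (f (v \<circ> ?s) - f (v \<circ> ?t \<circ> ?s))"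
          by (simp only: sigma_diff) (simp add: algebra_simps)
        also have "\<dots> = 0" using h1' h2' by simp
        finally show ?thesis .
      qed
      have nz: "?\<sigma> (tvar (v i) - tvar (v (Suc i))) \<noteq> 0"
      proof
        assume "?\<sigma> (tvar (v i) - tvar (v (Suc i))) = 0"
        then have eq: "(if v i = v a then v b else v i) = (if v (Suc i) = v a then v b else v (Suc i))"
          by (simp add: sigma_tvar tvar_inj)
        have inj: "\<And>x y. v x = v y \<longleftrightarrow> x = y" using Sn_inj[OF v] by (simp add: inj_eq)
        from eq have "(i = a \<and> b = Suc i) \<or> (Suc i = a \<and> b = i)" using inj V(3) by (auto split: if_splits)
        then have "?t = ?s" by (auto simp: simple_def transpose_commute)
        with False show False ..
      qed
      show "?\<sigma> (?g v - ?g (v \<circ> ?t)) = 0" using z nz by simp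
    qed
  qed
qed

theorem corollary2:
  fixes n i :: nat and C :: "(nat \<Rightarrow> nat) set"
  assumes "n \<ge> 1"
    and "1 \<le> i" and "i \<le> n - 1"
    and "C \<subseteq> transpositions n"
    and "simple i \<in> C"
    and "(\<lambda>\<tau>. simple i \<circ> \<tau> \<circ> simple i) ` C = C"
  shows "(\<forall>f \<in> HC n C. ddiff n i f \<in> HC n C)
    \<and> {f \<in> HC n C. ddiff n i f = (\<lambda>v. 0)} = {f \<in> HC n C. star f (simple i) = f}
    \<and> ddiff n i ` HC n C = {f \<in> HC n C. star f (simple i) = f}"
proof -
  have i: "1 \<le> i" "Suc i \<le> n" using assms by auto
  have iV: "i \<in> {1..n}" "Suc i \<in> {1..n}" using i by auto
  let ?s = "simple i"
  have sC: "f \<in> Htau n ?s" if "f \<in> HC n C" for f using that assms(5) by (simp add: HC_def)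
  have trC: "\<exists>a b. a \<in> {1..n} \<and> b \<in> {1..n} \<and> a \<noteq> b \<and> \<tau> = transpose a b" if "\<tau> \<in> C" for \<tau>
    using that assms(4) unfolding transpositions_def by blast
  have conjC: "?s \<circ> \<tau> \<circ> ?s \<in> C" if "\<tau> \<in> C" for \<tau>
    using that assms(6) by blast
  have sinv: "inv ?s = ?s" by (simp add: simple_def)
  have P1: "ddiff n i f \<in> HC n C" if f: "f \<in> HC n C" for f
  proof -
    have fH: "f \<in> Hn n" using f by (simp add: HC_def)
    have "ddiff n i f \<in> Htau n \<tau>" if t: "\<tau> \<in> C" for \<tau>
    proof -
      obtain a b where ab: "a \<in> {1..n}" "b \<in> {1..n}" "a \<noteq> b" "\<tau> = transpose a b" using trC[OF t] by blast
      have "?s \<circ> \<tau> \<circ> ?s = transpose (?s a) (?s b)" unfolding ab(4) simple_def by (rule conj_tr)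
      then have h2: "f \<in> Htau n (transpose (?s a) (?s b))" using conjC[OF t] f by (metis (no_types, lifting) HC_def mem_Collect_eq)
      have h1: "f \<in> Htau n (transpose a b)" using t f ab(4) by (simp add: HC_def)
      show ?thesis using dd_Htau[OF i fH sC[OF f] ab(1-3) h1 h2] ab(4) by simp
    qed
    then show ?thesis using ddiff_Hn[OF i sC[OF f]] by (simp add: HC_def)
  qed
  have P2: "ddiff n i f = (\<lambda>v. 0) \<longleftrightarrow> star f ?s = f" if f: "f \<in> HC n C" for f
  proof
    assume z: "ddiff n i f = (\<lambda>v. 0)"
    have "\<forall>v. f v - star f ?s v = (xfun n i v - xfun n (Suc i) v) * ddiff n i f v"
      using ddiff_prop[OF i sC[OF f]] by (simp add: dprop_def)
    then show "star f ?s = f" using z by (auto simp: fun_eq_iff)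
  next
    assume st: "star f ?s = f"
    have "dprop n i f (\<lambda>v. 0)" using st by (simp add: dprop_def Hn_iff)
    then show "ddiff n i f = (\<lambda>v. 0)" using dprop_unique[OF i ddiff_prop[OF i sC[OF f]]] by blast
  qed
  have P3a: "star (ddiff n i f) ?s = ddiff n i f" if f: "f \<in> HC n C" for f
  proof
    fix v
    show "star (ddiff n i f) ?s v = ddiff n i f v"
    proof (cases "v \<in> Sn n")
      case True then show ?thesis using ddiff_sym[OF i sC[OF f] True] by (simp add: star_def sinv)
    next
      case False
      then have "v \<circ> ?s \<notin> Sn n" using Sn_comp_tr[OF iV] by (simp add: simple_def)
      then show ?thesis using False ddiff_Hn[OF i sC[OF f]] by (simp add: star_def sinv Hn_iff)
    qed
  qed
  have P3b: "g \<in> ddiff n i ` HC n C" if g: "g \<in> HC n C" "star g ?s = g" for g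
  proof -
    define F where "F v = xfun n i v * g v" for v
    have gH: "g \<in> Hn n" using g by (simp add: HC_def)
    have xg: "good {1..n} (xfun n i v)" for v
      using Sn_range[OF _ iV(1), of v] by (auto simp: xfun_def good_tvar)
    have FH: "F \<in> Hn n" unfolding Hn_iff
    proof (intro conjI allI impI)
      fix v assume "v \<notin> Sn n" then show "F v = 0" by (simp add: F_def xfun_def)
    next
      fix v show "good {1..n} (F v)" unfolding F_def using xg[of v] gH
        by (intro good_mult) (auto simp: Hn_iff)
    qed
    have FC: "F \<in> Htau n \<tau>" if t: "\<tau> \<in> C" for \<tau>
    proof -
      obtain a b where ab: "a \<in> {1..n}" "b \<in> {1..n}" "a \<noteq> b" "\<tau> = transpose a b" using trC[OF t] by blast
      have hg: "g \<in> Htau n (transpose a b)" using t g ab(4) by (simp add: HC_def)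
      have Hg: "\<forall>v\<in>Sn n. sigma (v a) (v b) (g v - g (v \<circ> transpose a b)) = 0"
        using hg Htau_iff[OF ab(1-3) gH] by blast
      have "\<forall>v\<in>Sn n. sigma (v a) (v b) (F v - F (v \<circ> transpose a b)) = 0"
      proof
        fix v assume v: "v \<in> Sn n"
        have vt: "v \<circ> transpose a b \<in> Sn n" using Sn_comp_tr[OF ab(1,2)] v by simp
        have "sigma (v a) (v b) (F v - F (v \<circ> transpose a b))
            = sigma (v a) (v b) (tvar (v i)) * sigma (v a) (v b) (g v)
              - sigma (v a) (v b) (tvar (v (transpose a b i))) * sigma (v a) (v b) (g (v \<circ> transpose a b))"
          using v vt by (simp add: F_def xfun_def)
        also have "\<dots> = sigma (v a) (v b) (tvar (v i)) * sigma (v a) (v b) (g v - g (v \<circ> transpose a b))"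
          by (simp only: sig_st sigma_diff) (simp add: algebra_simps)
        also have "\<dots> = 0" using Hg v by simp
        finally show "sigma (v a) (v b) (F v - F (v \<circ> transpose a b)) = 0" .
      qed
      then show ?thesis using Htau_iff[OF ab(1-3) FH] ab(4) by simp
    qed
    have FHC: "F \<in> HC n C" using FH FC by (simp add: HC_def)
    have "dprop n i F g"
      unfolding dprop_def
    proof (intro conjI allI gH)
      fix v
      show "F v - star F ?s v = (xfun n i v - xfun n (Suc i) v) * g v"
      proof (cases "v \<in> Sn n")
        case True
        then have vs: "v \<circ> ?s \<in> Sn n" using Sn_comp_tr[OF iV] by (simp add: simple_def)
        have gs: "g (v \<circ> ?s) = g v" using g(2) by (metis star_def sinv)
        show ?thesis using True vs gs by (simp add: F_def star_def sinv xfun_def algebra_simps) (simp add: simple_def)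
      next
        case False
        then have "v \<circ> ?s \<notin> Sn n" using Sn_comp_tr[OF iV] by (simp add: simple_def)
        then show ?thesis using False by (simp add: F_def star_def sinv xfun_def)
      qed
    qed
    then have "ddiff n i F = g" using dprop_unique[OF i ddiff_prop[OF i sC[OF FHC]]] by blast
    then show ?thesis using FHC by blast
  qed
  show ?thesis
  proof (intro conjI ballI)
    show "\<And>f. f \<in> HC n C \<Longrightarrow> ddiff n i f \<in> HC n C" using P1 by blast
    show "{f \<in> HC n C. ddiff n i f = (\<lambda>v. 0)} = {f \<in> HC n C. star f ?s = f}" using P2 by blast
    show "ddiff n i ` HC n C = {f \<in> HC n C. star f ?s = f}" using P1 P3a P3b by blast
  qed
qed

end
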